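(* ${\rm Eigen}(\sigma_{\varphi,\mathfrak{w}},V^\Gamma)=\bigcup\{{\rm Eigen}(\sigma_{\varphi\restriction_{\frac\alpha\sim},\mathfrak{w}^{\frac\alpha\sim}},V^{\frac\alpha\sim}):\alpha\in\Gamma\}$.
   Context: $V$ is a vector space over a field $F$, $\Gamma$ a nonempty set, $\varphi:\Gamma\to\Gamma$ a self-map, and $\mathfrak{w}=(\mathfrak{w}_\alpha)_{\alpha\in\Gamma}\in F^\Gamma$. The weighted generalized shift is $\sigma_{\varphi,\mathfrak{w}}:V^\Gamma\to V^\Gamma$, $(x_\alpha)_{\alpha\in\Gamma}\mapsto(\mathfrak{w}_\alpha x_{\varphi(\alpha)})_{\alpha\in\Gamma}$. For nonempty $D\subseteq\Gamma$, $\mathfrak{w}^D:=(\mathfrak{w}_\alpha)_{\alpha\in D}$. The relation $\sim$ on $\Gamma$ is defined by $\alpha\sim\beta$ iff there exist $n,m\geq1$ with $\varphi^n(\alpha)=\varphi^m(\beta)$; it is an equivalence relation and $\frac{\alpha}{\sim}$ denotes the equivalence class of $\alpha$ (which is mapped into itself by $\varphi$). For a linear map $T:W\to W$, ${\rm Eigen}(T,W)$ is the set of all $r\in F$ such that $T(x)=rx$ for some nonzero $x\in W$. *)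

theory Defs
  imports Main "HOL.Vector_Spaces"
begin

text \<open>V^D for D a subset of the index set: functions 'a => 'v vanishing outside D.\<close>
definition funspace :: "'a set \<Rightarrow> ('a \<Rightarrow> 'v::zero) set" where
  "funspace D = {x. \<forall>\<alpha>. \<alpha> \<notin> D \<longrightarrow> x \<alpha> = 0}"

definition wshift :: "('f \<Rightarrow> 'v \<Rightarrow> 'v) \<Rightarrow> 'a set \<Rightarrow> ('a \<Rightarrow> 'a) \<Rightarrow> ('a \<Rightarrow> 'f)
    \<Rightarrow> ('a \<Rightarrow> 'v::zero) \<Rightarrow> ('a \<Rightarrow> 'v)" where
  "wshift s D \<phi> w x = (\<lambda>\<alpha>. if \<alpha> \<in> D then s (w \<alpha>) (x (\<phi> \<alpha>)) else 0)"

definition eigen :: "('f \<Rightarrow> 'v \<Rightarrow> 'v) \<Rightarrow> (('a \<Rightarrow> 'v) \<Rightarrow> ('a \<Rightarrow> 'v)) \<Rightarrow> ('a \<Rightarrow> 'v::zero) set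
    \<Rightarrow> 'f set" where
  "eigen s T W = {r. \<exists>x\<in>W. x \<noteq> (\<lambda>_. 0) \<and> T x = (\<lambda>\<alpha>. s r (x \<alpha>))}"

definition shift_rel :: "('a \<Rightarrow> 'a) \<Rightarrow> 'a \<Rightarrow> 'a \<Rightarrow> bool" where
  "shift_rel \<phi> \<alpha> \<beta> = (\<exists>n m. n \<ge> 1 \<and> m \<ge> 1 \<and> (\<phi> ^^ n) \<alpha> = (\<phi> ^^ m) \<beta>)"

definition shift_class :: "'a set \<Rightarrow> ('a \<Rightarrow> 'a) \<Rightarrow> 'a \<Rightarrow> 'a set" where
  "shift_class \<Gamma> \<phi> \<alpha> = {\<beta> \<in> \<Gamma>. shift_rel \<phi> \<alpha> \<beta>}"

end

theory Submission
  imports Defs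
begin

lemma shift_rel_step:
  assumes "shift_rel \<phi> \<alpha> \<beta>" shows "shift_rel \<phi> \<alpha> (\<phi> \<beta>)"
proof -
  from assms obtain n m where nm: "n \<ge> 1" "m \<ge> 1" "(\<phi> ^^ n) \<alpha> = (\<phi> ^^ m) \<beta>"
    unfolding shift_rel_def by blast
  show ?thesis
  proof (cases "m = 1")
    case True
    have "(\<phi> ^^ (Suc n)) \<alpha> = (\<phi> ^^ 1) (\<phi> \<beta>)"
      using nm True by (simp add: funpow_swap1)
    then show ?thesis unfolding shift_rel_def by (intro exI[of _ "Suc n"] exI[of _ 1]) simp
  next
    case False
    then obtain k where k: "m = Suc k" "k \<ge> 1" using nm by (cases m) auto
    have "(\<phi> ^^ n) \<alpha> = (\<phi> ^^ k) (\<phi> \<beta>)" using nm k by (simp add: funpow_swap1)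
    then show ?thesis unfolding shift_rel_def using nm k by blast
  qed
qed

lemma shift_rel_back:
  assumes "shift_rel \<phi> \<alpha> (\<phi> \<beta>)" shows "shift_rel \<phi> \<alpha> \<beta>"
proof -
  from assms obtain n m where nm: "n \<ge> 1" "m \<ge> 1" "(\<phi> ^^ n) \<alpha> = (\<phi> ^^ m) (\<phi> \<beta>)"
    unfolding shift_rel_def by blast
  then have "(\<phi> ^^ n) \<alpha> = (\<phi> ^^ Suc m) \<beta>" by (simp add: funpow_swap1)
  then show ?thesis unfolding shift_rel_def using nm by (intro exI[of _ n] exI[of _ "Suc m"]) simp
qed

theorem lemma2p4:
  fixes scale :: "'f::field \<Rightarrow> 'v::ab_group_add \<Rightarrow> 'v"
    and \<Gamma> :: "'a set" and \<phi> :: "'a \<Rightarrow> 'a" and w :: "'a \<Rightarrow> 'f"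
  assumes "vector_space scale"
    and "\<Gamma> \<noteq> {}"
    and "\<forall>\<alpha>\<in>\<Gamma>. \<phi> \<alpha> \<in> \<Gamma>"
  shows "eigen scale (wshift scale \<Gamma> \<phi> w) (funspace \<Gamma>)
       = (\<Union>\<alpha>\<in>\<Gamma>. eigen scale (wshift scale (shift_class \<Gamma> \<phi> \<alpha>) \<phi> w)
                                 (funspace (shift_class \<Gamma> \<phi> \<alpha>)))"
proof
  have md: "module scale" using assms(1) by (simp add: vector_space_def module_def)
  have z: "\<And>a. scale a 0 = 0" using md by (rule module.scale_zero_right)
  show "eigen scale (wshift scale \<Gamma> \<phi> w) (funspace \<Gamma>)
       \<subseteq> (\<Union>\<alpha>\<in>\<Gamma>. eigen scale (wshift scale (shift_class \<Gamma> \<phi> \<alpha>) \<phi> w)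
                                 (funspace (shift_class \<Gamma> \<phi> \<alpha>)))"
  proof
    fix r assume "r \<in> eigen scale (wshift scale \<Gamma> \<phi> w) (funspace \<Gamma>)"
    then obtain x where x: "x \<in> funspace \<Gamma>" "x \<noteq> (\<lambda>_. 0)"
      "wshift scale \<Gamma> \<phi> w x = (\<lambda>\<alpha>. scale r (x \<alpha>))" unfolding eigen_def by blast
    from x(2) obtain \<alpha> where a: "x \<alpha> \<noteq> 0" by auto
    with x(1) have aG: "\<alpha> \<in> \<Gamma>" unfolding funspace_def by auto
    define C where "C = shift_class \<Gamma> \<phi> \<alpha>"
    have aC: "\<alpha> \<in> C" using aG unfolding C_def shift_class_def shift_rel_def
      by (intro CollectI conjI exI[of _ 1]) simp_all
    have CG: "C \<subseteq> \<Gamma>" unfolding C_def shift_class_def by auto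
    have Cphi: "\<phi> \<beta> \<in> C" if "\<beta> \<in> C" for \<beta>
      using that assms(3) shift_rel_step[of \<phi> \<alpha> \<beta>] unfolding C_def shift_class_def by simp
    define y where "y = (\<lambda>\<beta>. if \<beta> \<in> C then x \<beta> else 0)"
    have "y \<in> funspace C" unfolding y_def funspace_def by auto
    moreover have "y \<noteq> (\<lambda>_. 0)"
    proof
      assume "y = (\<lambda>_. 0)"
      then have "y \<alpha> = 0" by simp
      then show False using a aC unfolding y_def by simp
    qed
    moreover have "wshift scale C \<phi> w y = (\<lambda>\<beta>. scale r (y \<beta>))"
    proof
      fix \<beta>
      show "wshift scale C \<phi> w y \<beta> = scale r (y \<beta>)"
      proof (cases "\<beta> \<in> C")
        case True
        then have "wshift scale \<Gamma> \<phi> w x \<beta> = scale r (x \<beta>)" using x(3) by simp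
        then show ?thesis using True CG Cphi unfolding wshift_def y_def by auto
      qed (simp add: wshift_def y_def z)
    qed
    ultimately show "r \<in> (\<Union>\<alpha>\<in>\<Gamma>. eigen scale (wshift scale (shift_class \<Gamma> \<phi> \<alpha>) \<phi> w)
                                 (funspace (shift_class \<Gamma> \<phi> \<alpha>)))"
      using aG unfolding eigen_def C_def by blast
  qed
  show "(\<Union>\<alpha>\<in>\<Gamma>. eigen scale (wshift scale (shift_class \<Gamma> \<phi> \<alpha>) \<phi> w)
                                 (funspace (shift_class \<Gamma> \<phi> \<alpha>)))
     \<subseteq> eigen scale (wshift scale \<Gamma> \<phi> w) (funspace \<Gamma>)"
  proof
    fix r assume "r \<in> (\<Union>\<alpha>\<in>\<Gamma>. eigen scale (wshift scale (shift_class \<Gamma> \<phi> \<alpha>) \<phi> w)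
                                 (funspace (shift_class \<Gamma> \<phi> \<alpha>)))"
    then obtain \<alpha> y where aG: "\<alpha> \<in> \<Gamma>" and y: "y \<in> funspace (shift_class \<Gamma> \<phi> \<alpha>)"
      "y \<noteq> (\<lambda>_. 0)"
      "wshift scale (shift_class \<Gamma> \<phi> \<alpha>) \<phi> w y = (\<lambda>\<beta>. scale r (y \<beta>))"
      unfolding eigen_def by blast
    define C where "C = shift_class \<Gamma> \<phi> \<alpha>"
    have CG: "C \<subseteq> \<Gamma>" unfolding C_def shift_class_def by auto
    have bk: "\<beta> \<in> C" if "\<beta> \<in> \<Gamma>" "\<phi> \<beta> \<in> C" for \<beta>
      using that shift_rel_back[of \<phi> \<alpha> \<beta>] unfolding C_def shift_class_def by simp
    have yC: "\<And>\<beta>. \<beta> \<notin> C \<Longrightarrow> y \<beta> = 0" using y(1) unfolding C_def funspace_def by auto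
    have "y \<in> funspace \<Gamma>" using yC CG unfolding funspace_def by auto
    moreover have "wshift scale \<Gamma> \<phi> w y = (\<lambda>\<beta>. scale r (y \<beta>))"
    proof
      fix \<beta>
      show "wshift scale \<Gamma> \<phi> w y \<beta> = scale r (y \<beta>)"
      proof (cases "\<beta> \<in> C")
        case True
        then have "wshift scale C \<phi> w y \<beta> = scale r (y \<beta>)" using y(3) unfolding C_def by simp
        then show ?thesis using True CG unfolding wshift_def by auto
      next
        case False
        then have "\<beta> \<in> \<Gamma> \<Longrightarrow> y (\<phi> \<beta>) = 0" using bk yC by blast
        then show ?thesis using False yC unfolding wshift_def by (simp add: z)
      qed
    qed
    ultimately show "r \<in> eigen scale (wshift scale \<Gamma> \<phi> w) (funspace \<Gamma>)"
      using y(2) unfolding eigen_def by blast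
  qed
qed

end
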